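(* Let $d\ge4$ be divisible by $4$, let $V=I$ (the $d\times d$ identity), let $h(x)=\|x\|$ (Euclidean norm) for $x\in\mathbb R^d$, and let $m=E(\|X\|)$ with $X\sim N(0,I)$. Let $i_0,i_1,\dots$ be i.i.d. uniform on $\{1,\dots,d\}$ and let $X_n$ be defined by the recursion below. Then for $n=d/4$, $$E\Big(\Big(\frac{\sum_{j=0}^{n-1}h(X_j)}{n}-m\Big)^2\Big)\ge\frac{d}{25}.$$
   Context: Let $e_i$ be the $i$-th standard basis column vector of $\mathbb R^d$. Let $(g_n)_{n\ge0}$ be i.i.d. standard Gaussian random variables independent of $(i_n)$. Define $X_0=0$ and $X_{n+1}=X_n+(g_n-e_{i_n}^TX_n)\,Ve_{i_n}$ for $n\ge0$. *)

theory Defs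
  imports "HOL-Probability.Probability"
begin

definition std_gauss :: "real measure" where
  "std_gauss = density lborel std_normal_density"

definition std_gauss_vec_density :: "real ^ 'n \<Rightarrow> real" where
  "std_gauss_vec_density x =
     (2 * pi) powr (- real CARD('n) / 2) * exp (- (norm x)\<^sup>2 / 2)"

primrec walk :: "real ^ 'n ^ 'n \<Rightarrow> (nat \<Rightarrow> 'a \<Rightarrow> 'n) \<Rightarrow> (nat \<Rightarrow> 'a \<Rightarrow> real)
                 \<Rightarrow> nat \<Rightarrow> 'a \<Rightarrow> real ^ 'n" where
  "walk V i g 0 \<omega> = 0"
| "walk V i g (Suc k) \<omega> =
     walk V i g k \<omega> + (g k \<omega> - walk V i g k \<omega> $ i k \<omega>) *\<^sub>R (V *v axis (i k \<omega>) 1)"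

end

theory Submission
  imports Defs
begin


lemma gauss_abs_nn:
  fixes u :: "'a::euclidean_space"
  assumes u: "u \<in> Basis"
  shows "(\<integral>\<^sup>+x. ennreal (\<bar>x \<bullet> u\<bar> * (\<Prod>b\<in>Basis. std_normal_density (x \<bullet> b))) \<partial>lborel) = ennreal (sqrt (2/pi))"
proof -
  let ?f = "\<lambda>b t. if b = u then \<bar>t\<bar> * std_normal_density t else std_normal_density t"
  have eq: "\<And>x. ennreal (\<bar>x \<bullet> u\<bar> * (\<Prod>b\<in>Basis. std_normal_density (x \<bullet> b))) = (\<Prod>b\<in>Basis. ennreal (?f b (x \<bullet> b)))"
  proof -
    fix x :: 'a
    have "(\<Prod>b\<in>Basis. ?f b (x \<bullet> b)) = (\<Prod>b\<in>Basis. (if b = u then \<bar>x \<bullet> b\<bar> else 1) * std_normal_density (x \<bullet> b))"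
      by (intro prod.cong) auto
    also have "\<dots> = \<bar>x \<bullet> u\<bar> * (\<Prod>b\<in>Basis. std_normal_density (x \<bullet> b))"
      using u by (simp add: prod.distrib prod.delta)
    moreover have "(\<Prod>b\<in>Basis. ennreal (?f b (x \<bullet> b))) = ennreal (\<Prod>b\<in>Basis. ?f b (x \<bullet> b))"
      by (rule prod_ennreal) (auto simp: normal_density_nonneg)
    ultimately show "?thesis x" by simp
  qed
  have "(\<integral>\<^sup>+x. (\<Prod>b\<in>Basis. ennreal (?f b (x \<bullet> b))) \<partial>lborel) = (\<Prod>b\<in>Basis. (\<integral>\<^sup>+t. ennreal (?f b t) \<partial>lborel))"
    by (rule nn_integral_lborel_prod) auto
  also have "\<dots> = (\<Prod>b\<in>Basis. (if b = u then ennreal (sqrt (2/pi)) else 1))"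
  proof (intro prod.cong refl)
    fix b :: 'a
    have 1: "(\<integral>\<^sup>+t. ennreal (std_normal_density t) \<partial>lborel) = 1"
      using std_normal_moment_even[of 0]
      by (subst nn_integral_eq_integral) (auto simp: has_bochner_integral_iff)
    have 2: "(\<integral>\<^sup>+t. ennreal (\<bar>t\<bar> * std_normal_density t) \<partial>lborel) = ennreal (sqrt (2/pi))"
      using std_normal_moment_abs_odd[of 0]
      by (subst nn_integral_eq_integral) (auto simp: has_bochner_integral_iff mult.commute)
    show "(\<integral>\<^sup>+t. ennreal (?f b t) \<partial>lborel) = (if b = u then ennreal (sqrt (2/pi)) else 1)"
      using 1 2 by auto
  qed
  also have "\<dots> = ennreal (sqrt (2/pi))"
    using u by (simp add: prod.delta)
  finally show ?thesis by (simp add: eq)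
qed

lemma gauss_abs:
  fixes u :: "'a::euclidean_space"
  assumes u: "u \<in> Basis"
  shows "integrable lborel (\<lambda>x. \<bar>x \<bullet> u\<bar> * (\<Prod>b\<in>Basis. std_normal_density (x \<bullet> b)))"
    "(\<integral>x. \<bar>x \<bullet> u\<bar> * (\<Prod>b\<in>Basis. std_normal_density (x \<bullet> b)) \<partial>lborel) = sqrt (2/pi)"
proof -
  have nn: "\<And>x. 0 \<le> \<bar>x \<bullet> u\<bar> * (\<Prod>b\<in>Basis. std_normal_density (x \<bullet> b))"
    by (auto intro!: prod_nonneg mult_nonneg_nonneg normal_density_nonneg)
  show "integrable lborel (\<lambda>x. \<bar>x \<bullet> u\<bar> * (\<Prod>b\<in>Basis. std_normal_density (x \<bullet> b)))"
    by (rule integrableI_nn_integral_finite[OF _ _ gauss_abs_nn[OF u]]) (auto simp: nn)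
  show "(\<integral>x. \<bar>x \<bullet> u\<bar> * (\<Prod>b\<in>Basis. std_normal_density (x \<bullet> b)) \<partial>lborel) = sqrt (2/pi)"
    by (subst integral_eq_nn_integral) (auto simp: nn gauss_abs_nn[OF u])
qed



lemma card_Basis_vec: "card (Basis :: (real^'n) set) = CARD('n)"
  using DIM_cart[where 'a=real and 'b='n] by simp

lemma dens_eq: "std_gauss_vec_density (x :: real^'n) = (\<Prod>b\<in>Basis. std_normal_density (x \<bullet> b))"
proof -
  have n2: "(norm x)\<^sup>2 = (\<Sum>b\<in>Basis. (x \<bullet> b)\<^sup>2)"
    unfolding power2_norm_eq_inner by (subst euclidean_inner) (simp add: power2_eq_square)
  have "exp (- (norm x)\<^sup>2 / 2) = (\<Prod>b\<in>Basis. exp (- (x \<bullet> b)\<^sup>2 / 2))"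
    by (simp add: n2 exp_sum[symmetric] sum_negf sum_divide_distrib)
  moreover have "(2 * pi) powr (- real CARD('n) / 2) = (1 / sqrt (2 * pi)) ^ CARD('n)"
  proof -
    have "(2 * pi) powr (- real CARD('n) / 2) = ((2*pi) powr (1/2)) powr (- real CARD('n))"
      by (simp add: powr_powr)
    also have "\<dots> = (sqrt (2*pi)) powr (- real CARD('n))"
      by (subst powr_half_sqrt) auto
    also have "\<dots> = inverse ((sqrt (2*pi)) ^ CARD('n))"
      by (subst powr_minus, subst powr_realpow) auto
    also have "\<dots> = (1 / sqrt (2 * pi)) ^ CARD('n)"
      by (simp add: power_one_over inverse_eq_divide)
    finally show ?thesis .
  qed
  moreover have "(\<Prod>b\<in>(Basis::(real^'n) set). (1 / sqrt (2 * pi)) * exp (- (x \<bullet> b)\<^sup>2 / 2))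
     = (1 / sqrt (2 * pi)) ^ CARD('n) * (\<Prod>b\<in>Basis. exp (- (x \<bullet> b)\<^sup>2 / 2))"
    by (simp only: prod.distrib prod_constant card_Basis_vec)
  ultimately show ?thesis
    unfolding std_gauss_vec_density_def std_normal_density_def
    by simp
qed

lemma l1_le: "(\<Sum>b\<in>Basis. \<bar>(x::real^'n) \<bullet> b\<bar>) \<le> sqrt (CARD('n)) * norm x"
proof -
  have "(\<Sum>b\<in>Basis. \<bar>x \<bullet> b\<bar>)\<^sup>2 \<le> (\<Sum>b\<in>Basis. \<bar>x \<bullet> b\<bar>\<^sup>2) * card (Basis :: (real^'n) set)"
    by (rule sum_squared_le_sum_of_squares)
  also have "\<dots> = (norm x)\<^sup>2 * CARD('n)"
    unfolding power2_norm_eq_inner by (subst euclidean_inner[of x x]) (simp add: power2_eq_square card_Basis_vec)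
  also have "\<dots> = (sqrt (CARD('n)) * norm x)\<^sup>2"
    by (simp add: power_mult_distrib)
  finally show ?thesis
    by (rule power2_le_imp_le) simp
qed

lemma m_bound:
  shows "integrable lborel (\<lambda>x::real^'n. norm x * std_gauss_vec_density x)"
    "sqrt (2/pi) * sqrt (CARD('n)) \<le> (\<integral>x. norm x * std_gauss_vec_density x \<partial>(lborel :: (real ^ 'n) measure))"
proof -
  let ?D = "\<lambda>x::real^'n. (\<Prod>b\<in>Basis. std_normal_density (x \<bullet> b))"
  have Dnn: "\<And>x. 0 \<le> ?D x" by (auto intro!: prod_nonneg normal_density_nonneg)
  have int1: "integrable lborel (\<lambda>x::real^'n. \<Sum>b\<in>Basis. \<bar>x \<bullet> b\<bar> * ?D x)"
    by (rule Bochner_Integration.integrable_sum[where f="\<lambda>b x. \<bar>x \<bullet> b\<bar> * ?D x"], rule gauss_abs(1), assumption)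
  have meas: "(\<lambda>x::real^'n. norm x * std_gauss_vec_density x) \<in> borel_measurable lborel"
    unfolding std_gauss_vec_density_def by measurable
  show int2: "integrable lborel (\<lambda>x::real^'n. norm x * std_gauss_vec_density x)"
  proof (rule Bochner_Integration.integrable_bound[OF int1 meas], rule AE_I2)
    fix x :: "real^'n"
    have "norm x * ?D x \<le> (\<Sum>b\<in>Basis. \<bar>x \<bullet> b\<bar>) * ?D x"
      by (intro mult_right_mono norm_le_l1 Dnn)
    then show "norm (norm x * std_gauss_vec_density x) \<le> norm (\<Sum>b\<in>Basis. \<bar>x \<bullet> b\<bar> * ?D x)"
      using Dnn[of x] by (simp add: dens_eq sum_distrib_right abs_mult)
  qed
  have "(\<integral>x. (\<Sum>b\<in>Basis. \<bar>x \<bullet> b\<bar> * ?D x) / sqrt (CARD('n)) \<partial>lborel)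
       = (\<Sum>b\<in>(Basis::(real^'n) set). sqrt (2/pi)) / sqrt (CARD('n))"
    by (simp add: Bochner_Integration.integral_sum gauss_abs)
  also have "\<dots> = sqrt (2/pi) * sqrt (CARD('n))"
  proof -
    have r: "real CARD('n) / sqrt (CARD('n)) = sqrt (CARD('n))" by (rule real_div_sqrt) simp
    have "(\<Sum>b\<in>(Basis::(real^'n) set). sqrt (2/pi)) / sqrt (CARD('n)) = sqrt (2/pi) * (real CARD('n) / sqrt (CARD('n)))"
      by (simp add: card_Basis_vec)
    then show ?thesis using r by simp
  qed
  finally have eq: "(\<integral>x. (\<Sum>b\<in>Basis. \<bar>x \<bullet> b\<bar> * ?D x) / sqrt (CARD('n)) \<partial>lborel) = sqrt (2/pi) * sqrt (CARD('n))" .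
  have "(\<integral>x. (\<Sum>b\<in>Basis. \<bar>x \<bullet> b\<bar> * ?D x) / sqrt (CARD('n)) \<partial>lborel) \<le> (\<integral>x. norm x * std_gauss_vec_density x \<partial>(lborel :: (real ^ 'n) measure))"
  proof (intro Bochner_Integration.integral_mono int2)
    show "integrable lborel (\<lambda>x::real^'n. (\<Sum>b\<in>Basis. \<bar>x \<bullet> b\<bar> * ?D x) / sqrt (CARD('n)))"
      using int1 by simp
    fix x :: "real^'n"
    have "(\<Sum>b\<in>Basis. \<bar>x \<bullet> b\<bar>) * ?D x \<le> (sqrt (CARD('n)) * norm x) * ?D x"
      by (intro mult_right_mono l1_le Dnn)
    then show "(\<Sum>b\<in>Basis. \<bar>x \<bullet> b\<bar> * ?D x) / sqrt (CARD('n)) \<le> norm x * std_gauss_vec_density x"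
      by (simp add: dens_eq sum_distrib_right[symmetric] field_simps)
  qed
  then show "sqrt (2/pi) * sqrt (CARD('n)) \<le> (\<integral>x. norm x * std_gauss_vec_density x \<partial>(lborel :: (real ^ 'n) measure))"
    using eq by simp
qed



lemma norm_sq_vec: "(norm (v::real^'n))\<^sup>2 = (\<Sum>k\<in>UNIV. (v$k)\<^sup>2)"
  unfolding power2_norm_eq_inner inner_vec_def by (simp add: power2_eq_square)

lemma walk_step: "walk (mat 1) i g (Suc k) \<omega> = (\<chi> c. if c = i k \<omega> then g k \<omega> else walk (mat 1) i g k \<omega> $ c)"
  by (auto simp: vec_eq_iff axis_def)

lemma walk_sq: "(norm (walk (mat 1) i g j \<omega>))\<^sup>2 \<le> (\<Sum>l<j. (g l \<omega>)\<^sup>2)"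
proof (induction j)
  case 0
  then show ?case by simp
next
  case (Suc k)
  let ?X = "walk (mat 1) i g k \<omega>"
  have "(norm (walk (mat 1) i g (Suc k) \<omega>))\<^sup>2 = (\<Sum>c\<in>UNIV. (if c = i k \<omega> then (g k \<omega>)\<^sup>2 else (?X $ c)\<^sup>2))"
    unfolding walk_step norm_sq_vec by (intro sum.cong) auto
  also have "\<dots> \<le> (\<Sum>c\<in>UNIV. (?X $ c)\<^sup>2 + (if c = i k \<omega> then (g k \<omega>)\<^sup>2 else 0))"
    by (intro sum_mono) auto
  also have "\<dots> = (norm ?X)\<^sup>2 + (g k \<omega>)\<^sup>2"
    by (simp add: sum.distrib norm_sq_vec)
  also have "\<dots> \<le> (\<Sum>l<Suc k. (g l \<omega>)\<^sup>2)"
    using Suc by simp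
  finally show ?case .
qed

lemma walk_meas:
  fixes i :: "nat \<Rightarrow> 'a \<Rightarrow> 'n::finite" and g :: "nat \<Rightarrow> 'a \<Rightarrow> real"
  assumes i: "\<And>k. i k \<in> measurable M (count_space UNIV)"
    and g: "\<And>k. g k \<in> borel_measurable M"
  shows "(\<lambda>\<omega>. walk (mat 1) i g j \<omega>) \<in> borel_measurable M"
proof (induction j)
  case 0
  then show ?case by simp
next
  case (Suc k)
  have "(\<lambda>\<omega>. (\<lambda>c \<omega>. walk (mat 1) i g k \<omega> + (g k \<omega> - walk (mat 1) i g k \<omega> $ c) *\<^sub>R (mat 1 *v axis c 1)) (i k \<omega>) \<omega>) \<in> borel_measurable M"
  proof (rule measurable_compose_countable'[OF _ i])
    fix c :: 'n
    show "(\<lambda>\<omega>. walk (mat 1) i g k \<omega> + (g k \<omega> - walk (mat 1) i g k \<omega> $ c) *\<^sub>R (mat 1 *v axis c 1)) \<in> borel_measurable M"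
      unfolding cart_eq_inner_axis matrix_vector_mul_lid using Suc g by measurable
  qed simp
  then show ?case by simp
qed



lemma sqrt_2pi_ge: "7/10 \<le> sqrt (2/pi)"
proof -
  have "(7/10::real)\<^sup>2 \<le> 2/pi" using pi_less_4 pi_gt_zero by (simp add: field_simps power2_eq_square)
  then show ?thesis by (rule real_le_rsqrt)
qed

theorem mainTheorem10:
  fixes M :: "'a measure"
    and i :: "nat \<Rightarrow> 'a \<Rightarrow> 'n::finite"
    and g :: "nat \<Rightarrow> 'a \<Rightarrow> real"
  assumes "prob_space M"
    and "4 dvd CARD('n)" and "CARD('n) \<ge> 4"
    and "prob_space.indep_vars M
           (\<lambda>_. measure_pmf (pmf_of_set (UNIV :: 'n set)) \<Otimes>\<^sub>M std_gauss)
           (\<lambda>k \<omega>. (i k \<omega>, g k \<omega>)) UNIV"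
    and "\<And>k. distr M (measure_pmf (pmf_of_set (UNIV :: 'n set)) \<Otimes>\<^sub>M std_gauss)
                (\<lambda>\<omega>. (i k \<omega>, g k \<omega>))
            = measure_pmf (pmf_of_set (UNIV :: 'n set)) \<Otimes>\<^sub>M std_gauss"
  shows "let d = CARD('n); n = d div 4;
             m = (\<integral>x. norm x * std_gauss_vec_density x \<partial>(lborel :: (real ^ 'n) measure))
         in prob_space.expectation M
              (\<lambda>\<omega>. ((\<Sum>j<n. norm (walk (mat 1) i g j \<omega>)) / real n - m)\<^sup>2)
            \<ge> real d / 25"
proof -
  interpret P: prob_space M by fact
  define PG where "PG = measure_pmf (pmf_of_set (UNIV :: 'n set)) \<Otimes>\<^sub>M std_gauss"
  have sets_G: "sets std_gauss = sets borel" by (simp add: std_gauss_def)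
  have probG: "prob_space std_gauss"
    unfolding std_gauss_def by (rule prob_space_normal_density) simp
  then interpret G: prob_space std_gauss .
  have rv: "\<And>k. (\<lambda>\<omega>. (i k \<omega>, g k \<omega>)) \<in> measurable M PG"
    using assms(4) unfolding P.indep_vars_def PG_def by auto
  have im: "\<And>k. i k \<in> measurable M (count_space UNIV)"
  proof -
    fix k
    have "(\<lambda>\<omega>. fst (i k \<omega>, g k \<omega>)) \<in> measurable M (measure_pmf (pmf_of_set (UNIV :: 'n set)))"
      using measurable_compose[OF rv[unfolded PG_def] measurable_fst] by simp
    then show "i k \<in> measurable M (count_space UNIV)"
      by (simp add: measurable_cong_sets[OF refl, of "measure_pmf _" "count_space UNIV"])
  qed
  have gm: "\<And>k. g k \<in> borel_measurable M"
  proof -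
    fix k
    have "(\<lambda>\<omega>. snd (i k \<omega>, g k \<omega>)) \<in> measurable M std_gauss"
      using measurable_compose[OF rv[unfolded PG_def] measurable_snd] by simp
    then show "g k \<in> borel_measurable M"
      by (simp add: measurable_cong_sets[OF refl sets_G])
  qed
  have marg: "\<And>k. distr M borel (g k) = std_gauss"
  proof (rule measure_eqI)
    fix k
    show "sets (distr M borel (g k)) = sets std_gauss" by (simp add: sets_G)
    fix A assume "A \<in> sets (distr M borel (g k))"
    then have A: "A \<in> sets borel" by simp
    have "emeasure (distr M borel (g k)) A = emeasure M (g k -` A \<inter> space M)"
      using A gm by (simp add: emeasure_distr)
    also have "\<dots> = emeasure M ((\<lambda>\<omega>. (i k \<omega>, g k \<omega>)) -` (UNIV \<times> A) \<inter> space M)"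
      by (auto intro!: arg_cong[where f="emeasure M"])
    also have "\<dots> = emeasure (distr M PG (\<lambda>\<omega>. (i k \<omega>, g k \<omega>))) (UNIV \<times> A)"
      using A rv sets_G by (subst emeasure_distr) (auto simp: PG_def)
    also have "\<dots> = emeasure PG (UNIV \<times> A)"
      using assms(5) unfolding PG_def by simp
    also have "\<dots> = emeasure (measure_pmf (pmf_of_set (UNIV :: 'n set))) UNIV * emeasure std_gauss A"
      unfolding PG_def using A sets_G
      by (subst G.emeasure_pair_measure_Times) auto
    also have "\<dots> = emeasure std_gauss A"
      using measure_pmf.emeasure_space_1[of "pmf_of_set (UNIV :: 'n set)"] by simp
    finally show "emeasure (distr M borel (g k)) A = emeasure std_gauss A" .
  qed
  have G2: "integrable std_gauss (\<lambda>x. x\<^sup>2)" "integral\<^sup>L std_gauss (\<lambda>x. x\<^sup>2) = 1"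
  proof -
    have "integrable lborel (\<lambda>x. std_normal_density x * x ^ (2*1))"
      using std_normal_moment_even[of 1] by (auto simp: has_bochner_integral_iff)
    then show "integrable std_gauss (\<lambda>x. x\<^sup>2)"
      unfolding std_gauss_def by (subst integrable_density) (auto simp: normal_density_nonneg)
    have "integral\<^sup>L lborel (\<lambda>x. std_normal_density x * x ^ (2*1)) = 1"
      using integral_std_normal_moment_even[of 1] by simp
    then show "integral\<^sup>L std_gauss (\<lambda>x. x\<^sup>2) = 1"
      unfolding std_gauss_def by (subst integral_density) (auto simp: normal_density_nonneg)
  qed
  have g2: "\<And>k. integrable M (\<lambda>\<omega>. (g k \<omega>)\<^sup>2)" "\<And>k. integral\<^sup>L M (\<lambda>\<omega>. (g k \<omega>)\<^sup>2) = 1"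
  proof -
    fix k
    show "integrable M (\<lambda>\<omega>. (g k \<omega>)\<^sup>2)"
      using G2(1) gm[of k] marg[of k] by (subst integrable_distr_eq[symmetric]) auto
    show "integral\<^sup>L M (\<lambda>\<omega>. (g k \<omega>)\<^sup>2) = 1"
      using G2(2) gm[of k] marg[of k] by (subst integral_distr[symmetric]) auto
  qed

  define d where "d = CARD('n)"
  define n where "n = d div 4"
  define m where "m = (\<integral>x. norm x * std_gauss_vec_density x \<partial>(lborel :: (real ^ 'n) measure))"
  define X where "X = walk (mat 1) i g"
  define S where "S = (\<lambda>\<omega>. \<Sum>l<n. (g l \<omega>)\<^sup>2)"
  define A where "A = (\<lambda>\<omega>. (\<Sum>j<n. norm (X j \<omega>)) / real n)"
  define s where "s = sqrt (real n)"
  define c where "c = sqrt (real d) / 5"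
  have rn: "real n = real d / 4" using assms(2) unfolding n_def d_def by (auto simp: real_of_nat_div)
  have npos: "n > 0" using assms(3) unfolding n_def d_def by simp
  have dpos: "d > 0" using assms(3) unfolding d_def by simp
  have s_eq: "s = sqrt (real d) / 2" unfolding s_def rn by (simp add: real_sqrt_divide)
  have spos: "s > 0" using npos unfolding s_def by simp
  have ns: "real n / s = s" unfolding s_def by (rule real_div_sqrt) simp
  have m_ge: "sqrt (2/pi) * sqrt (real d) \<le> m" unfolding m_def d_def by (rule m_bound(2))
  have S_nn: "\<And>\<omega>. 0 \<le> S \<omega>" unfolding S_def by (auto intro: sum_nonneg)
  have A_nn: "\<And>\<omega>. 0 \<le> A \<omega>" unfolding A_def by (auto intro!: sum_nonneg divide_nonneg_nonneg)
  have A_le: "\<And>\<omega>. A \<omega> \<le> sqrt (S \<omega>)"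
  proof -
    fix \<omega>
    have "\<And>j. j < n \<Longrightarrow> norm (X j \<omega>) \<le> sqrt (S \<omega>)"
    proof -
      fix j assume "j < n"
      have "(norm (X j \<omega>))\<^sup>2 \<le> (\<Sum>l<j. (g l \<omega>)\<^sup>2)" unfolding X_def by (rule walk_sq)
      also have "\<dots> \<le> S \<omega>" unfolding S_def using \<open>j < n\<close> by (intro sum_mono2) auto
      finally show "norm (X j \<omega>) \<le> sqrt (S \<omega>)" by (rule real_le_rsqrt)
    qed
    then have "(\<Sum>j<n. norm (X j \<omega>)) \<le> (\<Sum>j<n. sqrt (S \<omega>))" by (intro sum_mono) auto
    then show "A \<omega> \<le> sqrt (S \<omega>)" unfolding A_def using npos by (simp add: divide_le_eq mult.commute)
  qed
  have sqS: "\<And>\<omega>. sqrt (S \<omega>) \<le> (s + S \<omega> / s) / 2"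
  proof -
    fix \<omega>
    have "0 \<le> (sqrt (S \<omega>) - s)\<^sup>2" by simp
    then have "2 * s * sqrt (S \<omega>) \<le> S \<omega> + s\<^sup>2" using S_nn[of \<omega>] by (simp add: power2_eq_square algebra_simps)
    then show "sqrt (S \<omega>) \<le> (s + S \<omega> / s) / 2" using spos by (simp add: field_simps power2_eq_square)
  qed
  define L where "L = (\<lambda>\<omega>. 2 * c * (m - (s + S \<omega> / s) / 2) - c\<^sup>2)"
  have cpos: "c > 0" using dpos unfolding c_def by simp
  have L_le: "\<And>\<omega>. L \<omega> \<le> (A \<omega> - m)\<^sup>2"
  proof -
    fix \<omega>
    define B where "B = (s + S \<omega> / s) / 2"
    have "A \<omega> \<le> B" unfolding B_def using A_le[of \<omega>] sqS[of \<omega>] by linarith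
    then have h1: "2 * c * (m - B) \<le> 2 * c * (m - A \<omega>)"
      using cpos by (intro mult_left_mono) auto
    have h2: "(A \<omega> - m)\<^sup>2 - (2 * c * (m - A \<omega>) - c\<^sup>2) = (m - A \<omega> - c)\<^sup>2"
      by (simp add: power2_eq_square algebra_simps)
    have "0 \<le> (m - A \<omega> - c)\<^sup>2" by simp
    then have "2 * c * (m - B) - c\<^sup>2 \<le> (A \<omega> - m)\<^sup>2" using h1 h2 by linarith
    then show "L \<omega> \<le> (A \<omega> - m)\<^sup>2" unfolding L_def B_def .
  qed
  have Sint: "integrable M S" unfolding S_def by (intro Bochner_Integration.integrable_sum g2(1))
  have ES: "integral\<^sup>L M S = real n" unfolding S_def by (simp add: Bochner_Integration.integral_sum g2)
  have Lint: "integrable M L" unfolding L_def using Sint by simp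
  have EL: "integral\<^sup>L M L = 2 * c * (m - s) - c\<^sup>2"
  proof -
    have "integral\<^sup>L M L = 2 * c * (m - (s + integral\<^sup>L M S / s) / 2) - c\<^sup>2"
      unfolding L_def using Sint by (simp add: algebra_simps P.prob_space)
    then show ?thesis using ES ns by simp
  qed
  have Xm: "\<And>j. (\<lambda>\<omega>. X j \<omega>) \<in> borel_measurable M" unfolding X_def by (rule walk_meas[OF im gm])
  have Am: "(\<lambda>\<omega>. (A \<omega> - m)\<^sup>2) \<in> borel_measurable M" unfolding A_def using Xm by measurable
  have Qint: "integrable M (\<lambda>\<omega>. (A \<omega> - m)\<^sup>2)"
  proof (rule Bochner_Integration.integrable_bound[OF _ Am])
    show "integrable M (\<lambda>\<omega>. 2 * S \<omega> + 2 * m\<^sup>2)" using Sint by simp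
    show "AE \<omega> in M. norm ((A \<omega> - m)\<^sup>2) \<le> norm (2 * S \<omega> + 2 * m\<^sup>2)"
    proof (rule AE_I2)
    fix \<omega>
    have "(A \<omega>)\<^sup>2 \<le> S \<omega>" using A_le[of \<omega>] A_nn[of \<omega>] S_nn[of \<omega>]
      by (metis real_sqrt_le_iff real_sqrt_abs abs_of_nonneg order_trans real_sqrt_le_mono)
    moreover have "0 \<le> (A \<omega> + m)\<^sup>2" by simp
    ultimately show "norm ((A \<omega> - m)\<^sup>2) \<le> norm (2 * S \<omega> + 2 * m\<^sup>2)"
    proof -
      have e: "(A \<omega> - m)\<^sup>2 = 2*(A \<omega>)\<^sup>2 + 2*m\<^sup>2 - (A \<omega> + m)\<^sup>2" by (simp add: power2_eq_square algebra_simps)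
      have n1: "norm ((A \<omega> - m)\<^sup>2) = (A \<omega> - m)\<^sup>2" by simp
      have n2: "norm (2 * S \<omega> + 2 * m\<^sup>2) = 2 * S \<omega> + 2 * m\<^sup>2" using S_nn[of \<omega>] by simp
      show ?thesis using e n1 n2 \<open>(A \<omega>)\<^sup>2 \<le> S \<omega>\<close> \<open>0 \<le> (A \<omega> + m)\<^sup>2\<close> by linarith
    qed
    qed
  qed
  have "integral\<^sup>L M L \<le> integral\<^sup>L M (\<lambda>\<omega>. (A \<omega> - m)\<^sup>2)"
    by (rule Bochner_Integration.integral_mono[OF Lint Qint L_le])
  moreover have "real d / 25 \<le> 2 * c * (m - s) - c\<^sup>2"
  proof -
    have sd: "0 \<le> sqrt (real d)" by simp
    have "7/10 * sqrt (real d) \<le> m" using m_ge sqrt_2pi_ge sd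
      by (meson mult_right_mono order_trans)
    then have "sqrt (real d) / 5 \<le> m - s" unfolding s_eq by simp
    then have "2 * c * (sqrt (real d) / 5) \<le> 2 * c * (m - s)" using cpos by simp
    moreover have "c\<^sup>2 = real d / 25" unfolding c_def by (simp add: power_divide)
    moreover have "2 * c * (sqrt (real d) / 5) = 2 * (real d / 25)" unfolding c_def
      by (simp add: power2_eq_square[symmetric])
    ultimately show ?thesis by simp
  qed
  ultimately show ?thesis
    unfolding Let_def using EL unfolding d_def[symmetric] n_def[symmetric] m_def[symmetric] X_def[symmetric] A_def
    by simp
qed


end
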